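(* Each of the following systems has an isochronous center at the origin $O$ with zero Urabe function (in systems with $\pm,\mp$, upper signs throughout or lower signs throughout): (i) for every $a\in\mathbb R$: $\dot x=-y+xy-\frac{3a}{4}x^2+ax^3-\frac a4x^4$, $\dot y=x+3y^2+\frac{3a}{2}xy-x^2+\frac{9a}{4}x^2y+\left(\frac13+\frac98a^2\right)x^3-\frac{3a}{4}x^3y-\frac{3a^2}{8}x^4$; (ii) $\dot x=-y+xy\pm\frac{\sqrt2}{2}x^2\mp\frac{2\sqrt2}{3}x^3\pm\frac{\sqrt2}{6}x^4$, $\dot y=x+6y^2\mp\sqrt2xy-\frac52x^2\mp\frac{9\sqrt2}{2}x^2y+\frac{13}{3}x^3\pm\frac{3\sqrt2}{2}x^3y-\frac43x^4$; (iii) $\dot x=-y\mp2\sqrt2xy+x^2\pm2\sqrt2x^3$, $\dot y=x\mp6\sqrt2y^2-2xy\pm2\sqrt2x^2\pm8\sqrt2x^2y+\frac{14}{3}x^3\mp2\sqrt2x^4$.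
   Context: For a real planar polynomial system $\dot x=-y+A(x,y)$, $\dot y=x+B(x,y)$, with $A,B$ polynomials having no terms of degree $<2$, the origin $O$ is an isochronous center if there is a punctured neighborhood of $O$ in which every orbit is a closed orbit surrounding $O$ and all these orbits have the same period. Zero Urabe function: write the system as $\dot x=p_0(x)+p_1(x)y$, $\dot y=q_0(x)+q_1(x)y+q_2(x)y^2$ ($p_0(0)=q_0(0)=0$, $p_1(0)\ne0$), where it holds that $-\frac{p_1'p_0}{p_1}+q_1+p_0'-\frac{2q_2p_0}{p_1}\equiv0$. Put $f=-\frac{q_2+p_1'}{p_1}$, $g=-\frac{q_2p_0^2}{p_1}+q_1p_0-p_1q_0$ (the change $z=p_0+p_1y$ gives $\dot x=z$, $\dot z=-g(x)-f(x)z^2$), $F(x)=\int_0^xf$, and $\xi$ near $0$ by $\frac12\xi(x)^2=\int_0^xg(s)e^{2F(s)}ds$, $x\xi(x)>0$ for $x\ne0$. The Urabe function of an isochronous center is the odd analytic $h$ with $\frac{\xi(x)}{1+h(\xi(x))}=g(x)e^{F(x)}$; "zero Urabe function" means $h\equiv0$, i.e. $\xi(x)=g(x)e^{F(x)}$ near $0$. *)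

theory Defs
  imports "HOL-Analysis.Analysis"
begin

type_synonym vfield = "real \<times> real \<Rightarrow> real \<times> real"

definition is_solution :: "vfield \<Rightarrow> (real \<Rightarrow> real \<times> real) \<Rightarrow> bool" where
  "is_solution V \<gamma> \<longleftrightarrow> (\<forall>t. (\<gamma> has_vector_derivative V (\<gamma> t)) (at t))"

definition isochronous_center :: "vfield \<Rightarrow> bool" where
  "isochronous_center V \<longleftrightarrow>
     (\<exists>U T. open U \<and> (0,0) \<in> U \<and> T > 0 \<and>
        (\<forall>p \<in> U - {(0,0)}.
           (\<exists>\<gamma>. is_solution V \<gamma> \<and> \<gamma> 0 = p) \<and>
           (\<forall>\<gamma>. is_solution V \<gamma> \<and> \<gamma> 0 = p \<longrightarrow>
               (\<forall>t. \<gamma> (t + T) = \<gamma> t) \<and>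
               (\<forall>s. 0 < s \<and> s < T \<longrightarrow> \<gamma> s \<noteq> p) \<and>
               (0,0) \<in> inside (\<gamma> ` {0..T}))))"

definition oint :: "real \<Rightarrow> real \<Rightarrow> (real \<Rightarrow> real) \<Rightarrow> real" where
  "oint a b h = (if a \<le> b then integral {a..b} h else - integral {b..a} h)"

definition zero_urabe_coeffs ::
  "(real \<Rightarrow> real) \<Rightarrow> (real \<Rightarrow> real) \<Rightarrow> (real \<Rightarrow> real) \<Rightarrow> (real \<Rightarrow> real) \<Rightarrow> (real \<Rightarrow> real) \<Rightarrow> bool" where
  "zero_urabe_coeffs p0 p1 q0 q1 q2 \<longleftrightarrow>
     (let f = (\<lambda>x. - (q2 x + deriv p1 x) / p1 x);
          g = (\<lambda>x. - q2 x * (p0 x)^2 / p1 x + q1 x * p0 x - p1 x * q0 x);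
          F = (\<lambda>x. oint 0 x f);
          \<xi> = (\<lambda>x. sgn x * sqrt (2 * oint 0 x (\<lambda>s. g s * exp (2 * F s))))
      in p0 0 = 0 \<and> q0 0 = 0 \<and> p1 0 \<noteq> 0 \<and>
         (\<exists>\<delta>>0. \<forall>x. \<bar>x\<bar> < \<delta> \<longrightarrow>
             - deriv p1 x * p0 x / p1 x + q1 x + deriv p0 x - 2 * q2 x * p0 x / p1 x = 0) \<and>
         (\<exists>\<delta>>0. \<forall>x. \<bar>x\<bar> < \<delta> \<longrightarrow> \<xi> x = g x * exp (F x)))"

definition zero_urabe :: "vfield \<Rightarrow> bool" where
  "zero_urabe V \<longleftrightarrow>
     (\<exists>p0 p1 q0 q1 q2.
        (\<forall>x y. V (x, y) = (p0 x + p1 x * y, q0 x + q1 x * y + q2 x * y^2)) \<and>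
        zero_urabe_coeffs p0 p1 q0 q1 q2)"

end

theory Submission
  imports Defs
begin


lemma oint_ftc:
  assumes "\<And>t. min a b \<le> t \<Longrightarrow> t \<le> max a b \<Longrightarrow> (Fn has_real_derivative f t) (at t)"
  shows "oint a b f = Fn b - Fn a"
proof (cases "a \<le> b")
  case True
  have "(f has_integral (Fn b - Fn a)) {a..b}"
    apply (rule fundamental_theorem_of_calculus[OF True])
    using assms True by (auto simp: has_real_derivative_iff_has_vector_derivative[symmetric]
        intro: has_field_derivative_at_within)
  then show ?thesis using True by (simp add: oint_def integral_unique)
next
  case False
  have "(f has_integral (Fn a - Fn b)) {b..a}"
    apply (rule fundamental_theorem_of_calculus)
    using assms False by (auto simp: has_real_derivative_iff_has_vector_derivative[symmetric]
        intro: has_field_derivative_at_within)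
  then show ?thesis using False by (simp add: oint_def integral_unique)
qed


lemma sq_rot: "((a::real) * cc + b * ss)^2 + (b * cc - a * ss)^2 = (a^2 + b^2) * (ss^2 + cc^2)"
  by (simp add: power2_eq_square algebra_simps)

lemma alg2:
  fixes W Wm Ex U Vv d p G k M y yf :: real
  assumes W: "W \<noteq> 0" and Ex: "Ex = W * Wm" and UG: "U * Ex = G"
  and K: "W * (d * (p - W*y) - k*(p - W*y)*y - W*yf) - M*k*(p - W*y)^2 + W * G = 0"
  and y: "y = (p - Vv*Ex)/W"
  shows "((d * (Ex*Vv) - (- U * Ex + M*k*Wm*(Ex*Vv)*Vv)) * W - (p - Vv*Ex)*(k*(Ex*Vv))) / (W*W) = yf"
proof -
  have z: "p - W*y = Vv*Ex" using y W by (simp add: field_simps)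
  have z2: "p - Vv*Ex = W*y" using z by simp
  have e: "M*k*Wm*(Ex*Vv)*Vv*W = M*k*(Vv*Ex)^2" by (simp add: Ex power2_eq_square algebra_simps)
  have "(d * (Ex*Vv) - (- U * Ex + M*k*Wm*(Ex*Vv)*Vv)) * W - (p - Vv*Ex)*(k*(Ex*Vv))
      = d*(Ex*Vv)*W + (U*Ex)*W - M*k*Wm*(Ex*Vv)*Vv*W - (p - Vv*Ex)*(k*(Ex*Vv))"
    by (simp add: algebra_simps)
  also have "\<dots> = d*(Ex*Vv)*W + G*W - M*k*(Vv*Ex)^2 - (W*y)*(k*(Ex*Vv))"
    by (simp only: e UG z2)
  also have "\<dots> = W * (d * (Vv*Ex) - k*(Vv*Ex)*y) - M*k*(Vv*Ex)^2 + W * G"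
    by (simp add: algebra_simps)
  also have "\<dots> = W * W * yf" using K unfolding z by (simp add: algebra_simps)
  finally show ?thesis using W by simp
qed

locale usys =
  fixes p0 dp0 q0 q1 :: "real \<Rightarrow> real" and k :: real and m :: nat
  assumes k0: "k \<noteq> 0" and m1: "1 \<le> m"
  and dp0: "\<And>x. (p0 has_real_derivative dp0 x) (at x)"
  and p00: "p0 0 = 0"
  and hd: "\<And>x. (1+k*x)*(q1 x + dp0 x) = (2*m+1)*k*p0 x"
  and hf: "\<And>x. m*k*((1+k*x)*(q1 x*p0 x + (1+k*x)*q0 x) - m*k*(p0 x)^2) = (1+k*x)^2*((1+k*x)^m - 1)"
begin

definition "w x = 1 + k*x"
definition "V = (\<lambda>(x,y). (p0 x + (- w x) * y, q0 x + q1 x * y + (- (m*k)) * y^2))"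
definition "E x = w x ^ (m+1)"
definition "G x = (w x ^ (m+1) - w x) / (m*k)"
definition "u x = G x / E x"
definition "Phi q = (u (fst q), (p0 (fst q) - w (fst q) * snd q) / E (fst q))"
definition "P U = (1 - m*k*U) powr (-1/m)"
definition "X U = (P U - 1) / k"
definition "Psi q = (X (fst q), (p0 (X (fst q)) - snd q * E (X (fst q))) / w (X (fst q)))"
definition "rho = 1 / (2*m*\<bar>k\<bar>)"

lemma mpos: "real m > 0" using m1 by simp

lemma u_alt: "w x \<noteq> 0 \<Longrightarrow> u x = (1 - 1 / w x ^ m) / (m*k)"
  using mpos k0 by (simp add: u_def G_def E_def field_simps)

lemma key: "w x * (dp0 x * (p0 x - w x * y) - k * (p0 x - w x * y) * y
     - w x * (q0 x + q1 x * y - m*k*y^2)) - (m+1)*k*(p0 x - w x * y)^2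
     + w x * (q1 x * p0 x + w x * q0 x) - m*k*(p0 x)^2 = 0"
proof -
  have "w x * (dp0 x * (p0 x - w x * y) - k * (p0 x - w x * y) * y
     - w x * (q0 x + q1 x * y - m*k*y^2)) - (m+1)*k*(p0 x - w x * y)^2
     + w x * (q1 x * p0 x + w x * q0 x) - m*k*(p0 x)^2
     = (p0 x - w x * y) * (w x * (q1 x + dp0 x) - (2*m+1)*k*p0 x)"
    unfolding w_def by (simp add: algebra_simps power2_eq_square)
  also have "\<dots> = 0" using hd[of x] by (simp add: w_def)
  finally show ?thesis .
qed

lemma wG: "w x * G x = w x * (q1 x * p0 x + w x * q0 x) - m*k*(p0 x)^2"
proof -
  have "m*k*(w x * G x) = w x ^2 * (w x ^ m - 1)"
    using mpos k0 by (simp add: G_def field_simps power2_eq_square)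
  also have "\<dots> = m*k*(w x * (q1 x * p0 x + w x * q0 x) - m*k*(p0 x)^2)"
    using hf[of x] by (simp add: w_def)
  finally show ?thesis using mpos k0 by simp
qed

lemma key2: "w x * (dp0 x * (p0 x - w x * y) - k * (p0 x - w x * y) * y
     - w x * (q0 x + q1 x * y - m*k*y^2)) - (m+1)*k*(p0 x - w x * y)^2 + w x * G x = 0"
  using key[of x y] wG[of x] by simp

lemma P_pos: "1 - m*k*U > 0 \<Longrightarrow> 0 < P U" by (simp add: P_def)

lemma P_pow: assumes "1 - m*k*U > 0" shows "P U ^ m = 1 / (1 - m*k*U)"
proof -
  have "P U ^ m = P U powr real m" using P_pos[OF assms] by (simp add: powr_realpow)
  also have "\<dots> = (1 - m*k*U) powr (-1)" using mpos by (simp add: P_def powr_powr)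
  also have "\<dots> = 1 / (1 - m*k*U)" using assms by (simp add: powr_minus divide_inverse)
  finally show ?thesis .
qed

lemma w_X: "w (X U) = P U" using k0 by (simp add: w_def X_def)

lemma u_X: assumes "1 - m*k*U > 0" shows "u (X U) = U"
proof -
  have "w (X U) \<noteq> 0" using P_pos[OF assms] w_X by simp
  then have "u (X U) = (1 - 1 / P U ^ m) / (m*k)" by (simp add: u_alt w_X)
  also have "\<dots> = U" using assms mpos k0 by (simp add: P_pow)
  finally show ?thesis .
qed

lemma one_u: "w x > 0 \<Longrightarrow> 1 - m*k*u x = 1 / w x ^ m"
  using mpos k0 by (simp add: u_alt)

lemma X_u: assumes "w x > 0" shows "X (u x) = x"
proof -
  have "1 / w x ^ m = w x powr (- real m)"
    using assms by (simp add: powr_minus powr_realpow divide_inverse)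
  then have "P (u x) = (w x powr (- real m)) powr (-1/m)" by (simp add: P_def one_u[OF assms])
  also have "\<dots> = w x" using mpos assms by (simp add: powr_powr)
  finally show ?thesis using k0 by (simp add: X_def w_def)
qed

lemma w_Psi: "1 - m*k*fst q > 0 \<Longrightarrow> w (fst (Psi q)) > 0"
  by (simp add: Psi_def w_X P_pos)

lemma Phi_Psi: assumes "1 - m*k*fst q > 0" shows "Phi (Psi q) = q"
proof -
  have w: "w (X (fst q)) > 0" using w_Psi[OF assms] by (simp add: Psi_def)
  then have "E (X (fst q)) > 0" by (simp add: E_def)
  then show ?thesis using w by (simp add: Phi_def Psi_def u_X[OF assms] field_simps)
qed

lemma Psi_Phi: assumes "w (fst q) > 0" shows "Psi (Phi q) = q"
proof -
  have "E (fst q) > 0" using assms by (simp add: E_def)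
  then show ?thesis using assms by (simp add: Phi_def Psi_def X_u[OF assms] field_simps prod_eq_iff)
qed

lemma Dom_Phi: "w (fst q) > 0 \<Longrightarrow> 1 - m*k*fst (Phi q) > 0"
  by (simp add: Phi_def one_u)

lemma rho_pos: "rho > 0" using mpos k0 by (simp add: rho_def)

lemma rho_dom: assumes "\<bar>U\<bar> \<le> rho" shows "1 - m*k*U > 0"
proof -
  have "\<bar>m*k*U\<bar> = m*\<bar>k\<bar>*\<bar>U\<bar>" using mpos by (simp add: abs_mult)
  also have "\<dots> \<le> m*\<bar>k\<bar>*rho" using assms mpos by (intro mult_left_mono) auto
  also have "\<dots> = 1/2" using mpos k0 by (simp add: rho_def)
  finally show ?thesis by linarith
qed

lemma E_deriv: "(E has_real_derivative (m+1)*k*w x^m) (at x)"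
proof -
  have "((\<lambda>x. (1+k*x)^(m+1)) has_real_derivative real (m+1) * (1+k*x)^(m+1-1) * (0 + k*1)) (at x)"
    by (rule derivative_eq_intros refl | simp)+
  then show ?thesis unfolding E_def[abs_def] w_def by (simp add: algebra_simps)
qed

lemma G_deriv: "(G has_real_derivative ((m+1)*k*w x^m - k)/(m*k)) (at x)"
proof -
  have G: "G = (\<lambda>x. (E x - w x)/(m*k))" by (auto simp: G_def E_def)
  show ?thesis unfolding G unfolding w_def[abs_def]
    using mpos k0 by (auto intro!: derivative_eq_intros E_deriv[unfolded w_def] simp: field_simps)
qed

lemma u_deriv: assumes "w x > 0" shows "(u has_real_derivative 1 / E x) (at x)"
proof -
  have E0: "E x \<noteq> 0" using assms by (simp add: E_def)
  have "(u has_real_derivative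
     (((m+1)*k*w x^m - k)/(m*k) * E x - G x * ((m+1)*k*w x^m)) / (E x * E x)) (at x)"
    unfolding u_def[abs_def]
    using E0 by (auto intro!: derivative_eq_intros G_deriv E_deriv)
  moreover have "(((m+1)*k*w x^m - k)/(m*k) * E x - G x * ((m+1)*k*w x^m)) / (E x * E x)
      = 1 / E x"
    using mpos k0 assms by (simp add: E_def G_def field_simps)
  ultimately show ?thesis by simp
qed

lemma X_deriv: assumes "1 - m*k*U > 0" shows "(X has_real_derivative E (X U)) (at U)"
proof -
  have pd: "(1 - m*k*U) powr (-(1/m) - 1) = (1 - m*k*U) powr (-(1/m)) / (1 - m*k*U)"
    by (subst powr_diff) (use assms in simp)
  have "(X has_real_derivative (P U * ((- (m*k)) * (-1/m) / (1 - m*k*U))) / k) (at U)"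
    unfolding X_def[abs_def] P_def[abs_def]
    using assms pd by (auto intro!: derivative_eq_intros)
  moreover have "(P U * ((- (m*k)) * (-1/m) / (1 - m*k*U))) / k = E (X U)"
    using mpos k0 assms by (simp add: E_def w_X P_pow field_simps)
  ultimately show ?thesis by simp
qed

lemma isCont_X: "1 - m*k*U > 0 \<Longrightarrow> isCont X U" by (rule DERIV_isCont[OF X_deriv])
lemma isCont_u: "w x > 0 \<Longrightarrow> isCont u x" by (rule DERIV_isCont[OF u_deriv])
lemma isCont_E: "isCont E x" by (rule DERIV_isCont[OF E_deriv])
lemma isCont_p0: "isCont p0 x" by (rule DERIV_isCont[OF dp0])
lemma isCont_w: "isCont w x" unfolding w_def[abs_def] by (intro continuous_intros)

lemma isCont_Phi: assumes "w (fst q) > 0" shows "isCont Phi q"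
proof -
  have f: "isCont fst q" by (simp add: isCont_fst[OF continuous_ident])
  have c1: "isCont (\<lambda>q. u (fst q)) q" by (rule isCont_o2[OF f isCont_u[OF assms]])
  have c2: "isCont (\<lambda>q. p0 (fst q)) q" by (rule isCont_o2[OF f isCont_p0])
  have c3: "isCont (\<lambda>q. w (fst q)) q" by (rule isCont_o2[OF f isCont_w])
  have c4: "isCont (\<lambda>q. E (fst q)) q" by (rule isCont_o2[OF f isCont_E])
  have "E (fst q) \<noteq> 0" using assms by (simp add: E_def)
  then show ?thesis unfolding Phi_def[abs_def]
    by (intro continuous_intros c1 c2 c3 c4) auto
qed

lemma isCont_Psi: assumes "1 - m*k*fst q > 0" shows "isCont Psi q"
proof -
  have f: "isCont fst q" by (simp add: isCont_fst[OF continuous_ident])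
  have c0: "isCont (\<lambda>q. X (fst q)) q" by (rule isCont_o2[OF f isCont_X[OF assms]])
  have c2: "isCont (\<lambda>q. p0 (X (fst q))) q" by (rule isCont_o2[OF c0 isCont_p0])
  have c3: "isCont (\<lambda>q. w (X (fst q))) q" by (rule isCont_o2[OF c0 isCont_w])
  have c4: "isCont (\<lambda>q. E (X (fst q))) q" by (rule isCont_o2[OF c0 isCont_E])
  have "w (X (fst q)) \<noteq> 0" using w_X P_pos[OF assms] by simp
  then show ?thesis unfolding Psi_def[abs_def]
    by (intro continuous_intros c0 c2 c3 c4) auto
qed

lemma open_Om: "open {q. w (fst q) > 0}"
  unfolding w_def by (intro open_Collect_less continuous_intros)

lemma vd_fst: "(g has_vector_derivative v) F \<Longrightarrow> ((\<lambda>t. fst (g t)) has_real_derivative fst v) F"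
  by (auto simp: has_real_derivative_iff_has_vector_derivative has_vector_derivative_def
      dest: has_derivative_fst)
lemma vd_snd: "(g has_vector_derivative v) F \<Longrightarrow> ((\<lambda>t. snd (g t)) has_real_derivative snd v) F"
  by (auto simp: has_real_derivative_iff_has_vector_derivative has_vector_derivative_def
      dest: has_derivative_snd)

lemma p0_chain: "(f has_real_derivative f') (at t) \<Longrightarrow> D = dp0 (f t) * f'
   \<Longrightarrow> ((\<lambda>t. p0 (f t)) has_real_derivative D) (at t)"
  using DERIV_chain2[OF dp0] by blast
lemma E_chain: "(f has_real_derivative f') (at t) \<Longrightarrow> D = (m+1)*k*w (f t)^m * f'
   \<Longrightarrow> ((\<lambda>t. E (f t)) has_real_derivative D) (at t)"
  using DERIV_chain2[OF E_deriv] by blast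
lemma w_chain: "(f has_real_derivative f') (at t) \<Longrightarrow> D = k * f'
   \<Longrightarrow> ((\<lambda>t. w (f t)) has_real_derivative D) (at t)"
  unfolding w_def by (auto intro!: derivative_eq_intros)

lemma D2_eq:
  fixes xx yy :: real
  defines "z \<equiv> p0 xx - w xx * yy" and "y' \<equiv> q0 xx + q1 xx * yy - m*k*yy^2"
  assumes "w xx > 0"
  shows "((dp0 xx * z - (k * z * yy + w xx * y')) * E xx - (p0 xx - w xx * yy) * ((m+1)*k*w xx^m * z))
      / (E xx * E xx) = - u xx"
proof -
  have E0: "E xx \<noteq> 0" using assms by (simp add: E_def)
  have "(dp0 xx * z - (k * z * yy + w xx * y')) * E xx - (p0 xx - w xx * yy) * ((m+1)*k*w xx^m * z)
     = w xx ^ m * (w xx * (dp0 xx * z - k * z * yy - w xx * y') - (m+1)*k*z^2)"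
    by (simp add: E_def z_def algebra_simps power2_eq_square)
  also have "w xx * (dp0 xx * z - k * z * yy - w xx * y') - (m+1)*k*z^2 = - (w xx * G xx)"
    using key2[of xx yy] unfolding z_def y'_def by linarith
  finally have num: "(dp0 xx * z - (k * z * yy + w xx * y')) * E xx - (p0 xx - w xx * yy) * ((m+1)*k*w xx^m * z)
      = - (E xx * G xx)" by (simp add: E_def)
  show ?thesis unfolding num using E0 by (simp add: u_def)
qed

lemma Phi_traj:
  assumes g: "(g has_vector_derivative V (g t)) (at t)" and wpos: "w (fst (g t)) > 0"
  shows "((\<lambda>t. Phi (g t)) has_vector_derivative (snd (Phi (g t)), - fst (Phi (g t)))) (at t)"
proof -
  define xx where "xx = fst (g t)"
  define yy where "yy = snd (g t)"
  have gt: "g t = (xx, yy)" by (simp add: xx_def yy_def)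
  have Vg: "V (g t) = (p0 xx - w xx * yy, q0 xx + q1 xx * yy - m*k*yy^2)"
    by (simp add: gt V_def)
  have dx: "((\<lambda>t. fst (g t)) has_real_derivative (p0 xx - w xx * yy)) (at t)"
    using vd_fst[OF g] Vg by simp
  have dy: "((\<lambda>t. snd (g t)) has_real_derivative (q0 xx + q1 xx * yy - m*k*yy^2)) (at t)"
    using vd_snd[OF g] Vg by simp
  have w: "w xx > 0" using wpos by (simp add: xx_def)
  have E0: "E xx \<noteq> 0" using w by (simp add: E_def)
  have d1: "((\<lambda>t. u (fst (g t))) has_real_derivative (1 / E xx) * (p0 xx - w xx * yy)) (at t)"
    using DERIV_chain2[OF u_deriv[OF wpos] dx] by (simp add: xx_def)
  have d2: "((\<lambda>t. (p0 (fst (g t)) - w (fst (g t)) * snd (g t)) / E (fst (g t))) has_real_derivative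
     ((dp0 xx * (p0 xx - w xx * yy) - (k * (p0 xx - w xx * yy) * yy + w xx * (q0 xx + q1 xx * yy - m*k*yy^2))) * E xx
       - (p0 xx - w xx * yy) * ((m+1)*k*w xx^m * (p0 xx - w xx * yy))) / (E xx * E xx)) (at t)"
    unfolding xx_def yy_def
    by (rule derivative_eq_intros p0_chain E_chain w_chain dx[unfolded xx_def yy_def]
        dy[unfolded xx_def yy_def] refl | (use E0 in \<open>simp add: xx_def\<close>))+
  have "((\<lambda>t. Phi (g t)) has_vector_derivative
     ((1 / E xx) * (p0 xx - w xx * yy), - u xx)) (at t)"
    unfolding Phi_def
    using has_vector_derivative_Pair[OF d1[unfolded has_real_derivative_iff_has_vector_derivative]
       d2[unfolded has_real_derivative_iff_has_vector_derivative D2_eq[OF w]]] by simp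
  then show ?thesis by (simp add: Phi_def gt)
qed

definition "Wc (c::real\<times>real) (t::real) = (fst c * cos t + snd c * sin t, snd c * cos t - fst c * sin t)"
definition "gsol c t = Psi (Wc c t)"

lemma Wc_sq: "(fst (Wc c t))^2 + (snd (Wc c t))^2 = (fst c)^2 + (snd c)^2"
proof -
  have "(fst (Wc c t))^2 + (snd (Wc c t))^2 = ((fst c)^2 + (snd c)^2) * ((sin t)^2 + (cos t)^2)"
    unfolding Wc_def fst_conv snd_conv by (rule sq_rot)
  then show ?thesis by simp
qed

lemma norm_pair_real: "norm (q::real\<times>real) = sqrt ((fst q)^2 + (snd q)^2)"
  by (cases q) (simp add: norm_Pair)

lemma abs_fst_le: "\<bar>fst q\<bar> \<le> norm (q::real\<times>real)"
proof -
  have "sqrt ((fst q)^2) \<le> sqrt((fst q)^2 + (snd q)^2)" by (intro real_sqrt_le_mono) simp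
  then show ?thesis by (simp add: norm_pair_real)
qed

lemma norm_Wc: "norm (Wc c t) = norm c"
  unfolding norm_pair_real[of "Wc c t"] norm_pair_real[of c] Wc_sq ..

lemma Wc1_deriv: "((\<lambda>t. fst (Wc c t)) has_real_derivative snd (Wc c t)) (at t)"
  unfolding Wc_def by (auto intro!: derivative_eq_intros)
lemma Wc2_deriv: "((\<lambda>t. snd (Wc c t)) has_real_derivative - fst (Wc c t)) (at t)"
  unfolding Wc_def by (auto intro!: derivative_eq_intros simp: algebra_simps)

lemma X_chain: "(f has_real_derivative f') (at t) \<Longrightarrow> 1 - m*k*f t > 0 \<Longrightarrow> D = E (X (f t)) * f'
   \<Longrightarrow> ((\<lambda>t. X (f t)) has_real_derivative D) (at t)"
  using DERIV_chain2[OF X_deriv] by blast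

lemma gsol_deriv:
  assumes c: "norm c < rho"
  shows "(gsol c has_vector_derivative V (gsol c t)) (at t)"
proof -
  have "\<bar>fst (Wc c t)\<bar> \<le> norm (Wc c t)" by (rule abs_fst_le)
  then have "\<bar>fst (Wc c t)\<bar> \<le> rho" using c norm_Wc[of c t] by simp
  then have dom: "1 - m*k*fst (Wc c t) > 0" by (rule rho_dom)
  have wx: "w (X (fst (Wc c t))) > 0" using w_X P_pos[OF dom] by simp
  have dx: "((\<lambda>t. X (fst (Wc c t))) has_real_derivative E (X (fst (Wc c t))) * snd (Wc c t)) (at t)"
    by (rule X_chain[OF Wc1_deriv]) (use dom in simp_all)
  have UG: "fst (Wc c t) * E (X (fst (Wc c t))) = G (X (fst (Wc c t)))"
  proof -
    have "G (X (fst (Wc c t))) = u (X (fst (Wc c t))) * E (X (fst (Wc c t)))"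
      using wx by (simp add: u_def E_def)
    then show ?thesis by (simp add: u_X[OF dom])
  qed
  have dy: "((\<lambda>t. (p0 (X (fst (Wc c t))) - snd (Wc c t) * E (X (fst (Wc c t)))) / w (X (fst (Wc c t))))
      has_real_derivative (q0 (X (fst (Wc c t))) + q1 (X (fst (Wc c t))) * ((p0 (X (fst (Wc c t))) - snd (Wc c t) * E (X (fst (Wc c t)))) / w (X (fst (Wc c t))))
        - m*k*((p0 (X (fst (Wc c t))) - snd (Wc c t) * E (X (fst (Wc c t)))) / w (X (fst (Wc c t))))^2)) (at t)"
    apply (rule derivative_eq_intros p0_chain E_chain w_chain dx Wc2_deriv refl)+
    using wx apply simp
    apply (rule alg2[OF _ _ UG key2])
    using wx by (simp_all add: E_def)
  have "(gsol c has_vector_derivative (E (X (fst (Wc c t))) * snd (Wc c t),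
      q0 (X (fst (Wc c t))) + q1 (X (fst (Wc c t))) * ((p0 (X (fst (Wc c t))) - snd (Wc c t) * E (X (fst (Wc c t)))) / w (X (fst (Wc c t))))
        - m*k*((p0 (X (fst (Wc c t))) - snd (Wc c t) * E (X (fst (Wc c t)))) / w (X (fst (Wc c t))))^2)) (at t)"
    unfolding gsol_def[abs_def] Psi_def
    using has_vector_derivative_Pair[OF dx[unfolded has_real_derivative_iff_has_vector_derivative]
       dy[unfolded has_real_derivative_iff_has_vector_derivative]] by simp
  then show ?thesis using wx by (simp add: gsol_def Psi_def V_def field_simps)
qed

lemma gsol_sol: "norm c < rho \<Longrightarrow> is_solution V (gsol c)"
  unfolding is_solution_def using gsol_deriv by blast

lemma rot_fwd:
  fixes a b cc ss :: real
  assumes "ss^2 + cc^2 = 1"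
  shows "(a* cc + b* ss)* cc - (b* cc - a* ss)* ss = a \<and> (a* cc + b* ss)* ss + (b* cc - a* ss)* cc = b"
proof -
  have "(a* cc + b* ss)* cc - (b* cc - a* ss)* ss = a*(ss^2+cc^2)"
    "(a* cc + b* ss)* ss + (b* cc - a* ss)* cc = b*(ss^2+cc^2)"
    by (simp_all add: power2_eq_square algebra_simps)
  then show ?thesis using assms by simp
qed

lemma rot_inv:
  fixes a b c1 c2 cc ss :: real
  assumes "a * cc - b * ss = c1" "a * ss + b * cc = c2" "ss^2 + cc^2 = 1"
  shows "a = c1 * cc + c2 * ss \<and> b = c2 * cc - c1 * ss"
proof -
  have "c1 * cc + c2 * ss = a * (ss^2 + cc^2)" "c2 * cc - c1 * ss = b * (ss^2 + cc^2)"
    unfolding assms(1)[symmetric] assms(2)[symmetric] by (simp_all add: power2_eq_square algebra_simps)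
  then show ?thesis using assms(3) by simp
qed

lemma dom_norm: "norm (q::real\<times>real) \<le> rho \<Longrightarrow> 1 - m*k*fst q > 0"
  using abs_fst_le[of q] by (intro rho_dom) linarith

lemma Phi_gsol: "norm c < rho \<Longrightarrow> Phi (gsol c t) = Wc c t"
  unfolding gsol_def by (rule Phi_Psi, rule dom_norm) (simp add: norm_Wc)

lemma w_gsol: "norm c < rho \<Longrightarrow> w (fst (gsol c t)) > 0"
  unfolding gsol_def by (rule w_Psi, rule dom_norm) (simp add: norm_Wc)

lemma gsol_0: "gsol c 0 = Psi c" by (simp add: gsol_def Wc_def)

lemma sol_cont: "is_solution V g \<Longrightarrow> continuous_on UNIV g"
  unfolding is_solution_def
  by (intro continuous_at_imp_continuous_on ballI has_vector_derivative_continuous) blast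

lemma unique:
  assumes c: "norm c < rho" and g: "is_solution V g" and g0: "g 0 = gsol c 0"
  shows "g t = gsol c t"
proof -
  define A where "A = {t. g t = gsol c t}"
  have cg: "continuous_on UNIV g" by (rule sol_cont[OF g])
  have cs: "continuous_on UNIV (gsol c)" by (rule sol_cont[OF gsol_sol[OF c]])
  have clA: "closed A" unfolding A_def by (rule closed_Collect_eq[OF cg cs])
  have opA: "open A"
    unfolding open_contains_ball
  proof (intro ballI)
    fix t0 assume "t0 \<in> A"
    then have gt0: "g t0 = gsol c t0" by (simp add: A_def)
    have inOm: "g t0 \<in> {q. w (fst q) > 0}" using w_gsol[OF c] gt0 by simp
    have "isCont g t0" using cg by (simp add: continuous_on_eq_continuous_at)
    then obtain S where S: "open S" "t0 \<in> S" "\<forall>x\<in>S. g x \<in> {q. w (fst q) > 0}"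
      using inOm open_Om unfolding continuous_at_open by metis
    then obtain e where e: "e > 0" "ball t0 e \<subseteq> S" using open_contains_ball by blast
    define Q1 where "Q1 t = fst (Phi (g t)) * cos t - snd (Phi (g t)) * sin t" for t
    define Q2 where "Q2 t = fst (Phi (g t)) * sin t + snd (Phi (g t)) * cos t" for t
    have dPhi: "((\<lambda>t. Phi (g t)) has_vector_derivative (snd (Phi (g t)), - fst (Phi (g t)))) (at t)"
      if "t \<in> ball t0 e" for t
      using Phi_traj[of g t] g S e that unfolding is_solution_def by auto
    have h1: "((\<lambda>t. fst (Phi (g t))) has_real_derivative snd (Phi (g t))) (at t)"
      if "t \<in> ball t0 e" for t using vd_fst[OF dPhi[OF that]] by simp
    have h2: "((\<lambda>t. snd (Phi (g t))) has_real_derivative - fst (Phi (g t))) (at t)"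
      if "t \<in> ball t0 e" for t using vd_snd[OF dPhi[OF that]] by simp
    have dQ1: "(Q1 has_real_derivative 0) (at t)" if "t \<in> ball t0 e" for t
    proof -
      have "(Q1 has_real_derivative (snd (Phi (g t)) * cos t + (- sin t) * fst (Phi (g t)))
          - (- fst (Phi (g t)) * sin t + cos t * snd (Phi (g t)))) (at t)"
        unfolding Q1_def[abs_def] by (intro DERIV_diff DERIV_mult h1[OF that] h2[OF that] DERIV_cos DERIV_sin)
      then show ?thesis by (simp add: algebra_simps)
    qed
    have dQ2: "(Q2 has_real_derivative 0) (at t)" if "t \<in> ball t0 e" for t
    proof -
      have "(Q2 has_real_derivative (snd (Phi (g t)) * sin t + cos t * fst (Phi (g t)))
          + (- fst (Phi (g t)) * cos t + (- sin t) * snd (Phi (g t)))) (at t)"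
        unfolding Q2_def[abs_def] by (intro DERIV_add DERIV_mult h1[OF that] h2[OF that] DERIV_cos DERIV_sin)
      then show ?thesis by (simp add: algebra_simps)
    qed
    obtain C1 where C1: "\<forall>t\<in>ball t0 e. Q1 t = C1"
      using has_field_derivative_zero_constant[of "ball t0 e" Q1] dQ1
      by (metis convex_ball has_field_derivative_at_within)
    obtain C2 where C2: "\<forall>t\<in>ball t0 e. Q2 t = C2"
      using has_field_derivative_zero_constant[of "ball t0 e" Q2] dQ2
      by (metis convex_ball has_field_derivative_at_within)
    have t0b: "t0 \<in> ball t0 e" using e(1) by simp
    have Q1c: "Q1 t = Q1 t0" if "t \<in> ball t0 e" for t using C1 that t0b by simp
    have Q2c: "Q2 t = Q2 t0" if "t \<in> ball t0 e" for t using C2 that t0b by simp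
    have PW: "Phi (g t0) = Wc c t0" using gt0 Phi_gsol[OF c] by simp
    have Q10: "Q1 t0 = fst c" and Q20: "Q2 t0 = snd c"
      using rot_fwd[of "sin t0" "cos t0" "fst c" "snd c"] by (simp_all add: Q1_def Q2_def PW Wc_def)
    have "ball t0 e \<subseteq> A"
    proof
      fix t assume t: "t \<in> ball t0 e"
      have "fst (Phi (g t)) = fst c * cos t + snd c * sin t \<and> snd (Phi (g t)) = snd c * cos t - fst c * sin t"
        by (rule rot_inv) (use Q1c[OF t] Q2c[OF t] Q10 Q20 in \<open>simp_all add: Q1_def Q2_def\<close>)
      then have "Phi (g t) = Wc c t" by (simp add: Wc_def prod_eq_iff)
      moreover have "w (fst (g t)) > 0" using S e t by auto
      ultimately have "g t = Psi (Wc c t)" using Psi_Phi by metis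
      then show "t \<in> A" by (simp add: A_def gsol_def)
    qed
    then show "\<exists>e>0. ball t0 e \<subseteq> A" using e(1) by blast
  qed
  have "A \<inter> (- A) \<inter> UNIV = {}" "UNIV \<subseteq> A \<union> (- A)" by auto
  from connectedD[OF connected_UNIV opA _ this] clA have "A \<inter> UNIV = {} \<or> - A \<inter> UNIV = {}"
    by (simp add: open_Compl)
  moreover have "0 \<in> A" using g0 by (simp add: A_def)
  ultimately have "A = UNIV" by auto
  then have "t \<in> A" by simp
  then show ?thesis by (simp add: A_def)
qed

lemma circle:
  assumes nq: "norm q = norm c" and c0: "c \<noteq> 0"
  shows "\<exists>t. 0 \<le> t \<and> t \<le> 2*pi \<and> Wc c t = q"
proof -
  define r2 where "r2 = (fst c)^2 + (snd c)^2"
  have r2: "r2 > 0" using c0 by (simp add: r2_def prod_eq_iff sum_power2_gt_zero_iff)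
  have qq: "(fst q)^2 + (snd q)^2 = r2" using nq by (simp add: norm_pair_real r2_def)
  define x where "x = (fst c * fst q + snd c * snd q) / r2"
  define y where "y = (snd c * fst q - fst c * snd q) / r2"
  have "(fst c * fst q + snd c * snd q)^2 + (snd c * fst q - fst c * snd q)^2 = r2 * r2"
    using sq_rot[of "fst c" "fst q" "snd c" "snd q"] qq by (simp add: r2_def algebra_simps)
  moreover have "x^2 + y^2 = ((fst c * fst q + snd c * snd q)^2 + (snd c * fst q - fst c * snd q)^2) / r2^2"
    unfolding x_def y_def power_divide by (rule add_divide_distrib[symmetric])
  ultimately have "x^2 + y^2 = 1" using r2 by (simp add: power2_eq_square)
  then obtain t where t: "0 \<le> t" "t < 2*pi" "x = cos t" "y = sin t" by (rule sincos_total_2pi)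
  have e1: "fst c * (fst c * fst q + snd c * snd q) + snd c * (snd c * fst q - fst c * snd q) = r2 * fst q"
    by (simp add: r2_def power2_eq_square algebra_simps)
  have e2: "snd c * (fst c * fst q + snd c * snd q) - fst c * (snd c * fst q - fst c * snd q) = r2 * snd q"
    by (simp add: r2_def power2_eq_square algebra_simps)
  have "Wc c t = q"
  proof -
    have "fst c * x + snd c * y = (fst c * (fst c * fst q + snd c * snd q) + snd c * (snd c * fst q - fst c * snd q)) / r2"
      using r2 unfolding x_def y_def by (simp add: field_simps)
    then have 1: "fst c * x + snd c * y = fst q" using e1 r2 by simp
    have "snd c * x - fst c * y = (snd c * (fst c * fst q + snd c * snd q) - fst c * (snd c * fst q - fst c * snd q)) / r2"
      using r2 unfolding x_def y_def by (simp add: field_simps)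
    then have "snd c * x - fst c * y = snd q" using e2 r2 by simp
    with 1 show ?thesis using t by (simp add: Wc_def prod_eq_iff)
  qed
  then show ?thesis using t by auto
qed

lemma cos_Wc: assumes "Wc c s = c" "c \<noteq> 0" shows "cos s = 1"
proof -
  have e: "fst c * cos s + snd c * sin s = fst c" "snd c * cos s - fst c * sin s = snd c"
    using assms(1) by (simp_all add: Wc_def prod_eq_iff)
  have r2: "(fst c)^2 + (snd c)^2 > 0" using assms(2) by (simp add: prod_eq_iff sum_power2_gt_zero_iff)
  have "((fst c)^2 + (snd c)^2) * cos s = fst c * (fst c * cos s + snd c * sin s) + snd c * (snd c * cos s - fst c * sin s)"
    by (simp add: power2_eq_square algebra_simps)
  also have "\<dots> = (fst c)^2 + (snd c)^2" unfolding e by (simp add: power2_eq_square)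
  finally show ?thesis using r2 by force
qed

lemma Phi0: "Phi (0,0) = (0,0)"
  by (simp add: Phi_def u_def G_def E_def w_def p00)

lemma cont_Phi: "continuous_on {q. w (fst q) > 0} Phi"
  by (intro continuous_at_imp_continuous_on ballI isCont_Phi) simp

lemma open_lev: "open {q. w (fst q) > 0 \<and> norm (Phi q) < r}"
proof -
  have "{q. w (fst q) > 0 \<and> norm (Phi q) < r} = {q. w (fst q) > 0} \<inter> Phi -` ball 0 r" by auto
  then show ?thesis using continuous_open_preimage[OF cont_Phi open_Om open_ball] by simp
qed

lemma inside_lemma:
  assumes cr: "norm c < rho" and c0: "c \<noteq> 0"
  shows "(0,0) \<in> inside (gsol c ` {0..2*pi})"
proof -
  define C where "C = gsol c ` {0..2*pi}"
  define r where "r = norm c"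
  define D where "D = {q. w (fst q) > 0 \<and> norm (Phi q) < r}"
  define K where "K = Psi ` cball 0 r"
  have r: "0 < r" "r < rho" using c0 cr by (auto simp: r_def)
  have openD: "open D" unfolding D_def by (rule open_lev)
  have "continuous_on (cball 0 r) Psi"
    using r by (intro continuous_at_imp_continuous_on ballI isCont_Psi dom_norm) auto
  then have compK: "compact K" unfolding K_def by (rule compact_continuous_image[OF _ compact_cball])
  have DK: "D \<subseteq> K"
  proof
    fix q assume q: "q \<in> D"
    then have "w (fst q) > 0" "norm (Phi q) < r" by (auto simp: D_def)
    then show "q \<in> K" unfolding K_def using Psi_Phi
      by (intro image_eqI[of _ _ "Phi q"]) (auto simp: mem_cball_0)
  qed
  have KDC: "K \<subseteq> D \<union> C"
  proof
    fix q assume "q \<in> K"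
    then obtain q' where q': "q' \<in> cball 0 r" "q = Psi q'" by (auto simp: K_def)
    have nq': "norm q' \<le> r" using q' by (simp add: mem_cball_0)
    then have dom: "1 - m*k*fst q' > 0" using r by (intro dom_norm) auto
    show "q \<in> D \<union> C"
    proof (cases "norm q' < r")
      case True
      then show ?thesis using w_Psi[OF dom] Phi_Psi[OF dom] q' by (simp add: D_def)
    next
      case False
      then have "norm q' = norm c" using nq' by (simp add: r_def)
      then obtain t where t: "0 \<le> t" "t \<le> 2*pi" "Wc c t = q'" using circle c0 by blast
      then have "gsol c t = q" using q' by (simp add: gsol_def)
      then show ?thesis using t by (auto simp: C_def)
    qed
  qed
  have "norm (Phi (gsol c t)) = r" for t using Phi_gsol[OF cr, of t] norm_Wc[of c t] by (simp add: r_def)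
  then have DC: "D \<inter> C = {}" by (auto simp: D_def C_def)
  have zD: "(0,0) \<in> D" using r by (simp add: D_def Phi0 w_def)
  have zC: "(0,0) \<notin> C" using zD DC by blast
  define Cc where "Cc = connected_component_set (- C) (0,0)"
  have conn: "connected Cc" unfolding Cc_def by (rule connected_connected_component)
  have CcC: "Cc \<subseteq> - C" unfolding Cc_def by (rule connected_component_subset)
  have zCc: "(0,0) \<in> Cc" using zC by (simp add: Cc_def)
  have cov: "Cc \<subseteq> D \<union> - K" using CcC KDC by blast
  have dis: "D \<inter> - K \<inter> Cc = {}" using DK by blast
  have "open (- K)" using compK by (simp add: compact_imp_closed open_Compl)
  from connectedD[OF conn openD this dis cov] zCc zD have "- K \<inter> Cc = {}" by blast
  then have "Cc \<subseteq> K" by blast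
  then have "bounded Cc" using compK by (metis bounded_subset compact_imp_bounded)
  then show ?thesis using zC unfolding inside_def C_def Cc_def by simp
qed

theorem iso: "isochronous_center V"
proof -
  let ?U = "{q. w (fst q) > 0 \<and> norm (Phi q) < rho}"
  have oU: "open ?U" by (rule open_lev)
  have zU: "(0,0) \<in> ?U" using rho_pos by (simp add: w_def Phi0)
  have main: "\<forall>p\<in>?U - {(0,0)}. (\<exists>\<gamma>. is_solution V \<gamma> \<and> \<gamma> 0 = p) \<and>
     (\<forall>\<gamma>. is_solution V \<gamma> \<and> \<gamma> 0 = p \<longrightarrow>
        (\<forall>t. \<gamma> (t + 2*pi) = \<gamma> t) \<and>
        (\<forall>s. 0 < s \<and> s < 2*pi \<longrightarrow> \<gamma> s \<noteq> p) \<and>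
        (0,0) \<in> inside (\<gamma> ` {0..2*pi}))"
  proof
    fix p assume p: "p \<in> ?U - {(0,0)}"
    define c where "c = Phi p"
    have wp: "w (fst p) > 0" and cr: "norm c < rho" and pn: "p \<noteq> (0,0)" using p by (auto simp: c_def)
    have pc: "Psi c = p" using Psi_Phi[OF wp] by (simp add: c_def)
    have c0: "c \<noteq> 0"
    proof
      assume "c = 0"
      then have "Psi (Phi (0,0)) = p" using pc Phi0 by (simp add: zero_prod_def)
      then show False using Psi_Phi[of "(0,0)"] pn by (simp add: w_def)
    qed
    have g0: "gsol c 0 = p" by (simp add: gsol_0 pc)
    show "(\<exists>\<gamma>. is_solution V \<gamma> \<and> \<gamma> 0 = p) \<and>
     (\<forall>\<gamma>. is_solution V \<gamma> \<and> \<gamma> 0 = p \<longrightarrow>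
        (\<forall>t. \<gamma> (t + 2*pi) = \<gamma> t) \<and>
        (\<forall>s. 0 < s \<and> s < 2*pi \<longrightarrow> \<gamma> s \<noteq> p) \<and>
        (0,0) \<in> inside (\<gamma> ` {0..2*pi}))"
    proof (intro conjI allI impI)
      show "\<exists>\<gamma>. is_solution V \<gamma> \<and> \<gamma> 0 = p" using gsol_sol[OF cr] g0 by blast
    next
      fix \<gamma> assume "is_solution V \<gamma> \<and> \<gamma> 0 = p"
      then have eq: "\<gamma> = gsol c" using unique[OF cr] g0 by auto
      fix t show "\<gamma> (t + 2*pi) = \<gamma> t" by (simp add: eq gsol_def Wc_def)
    next
      fix \<gamma> assume "is_solution V \<gamma> \<and> \<gamma> 0 = p"
      then have eq: "\<gamma> = gsol c" using unique[OF cr] g0 by auto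
      fix s assume s: "0 < s \<and> s < 2*pi"
      show "\<gamma> s \<noteq> p"
      proof
        assume "\<gamma> s = p"
        then have "Wc c s = c" using Phi_gsol[OF cr, of s] eq by (simp add: c_def)
        then have "cos s = 1" using c0 by (rule cos_Wc)
        then obtain n :: int where n: "s = n * 2 * pi" by (auto simp: cos_one_2pi_int)
        have "0 < real_of_int n * (2*pi)" "real_of_int n * (2*pi) < 1 * (2*pi)" using s n by auto
        then have "0 < real_of_int n" "real_of_int n < 1"
          by (simp_all add: zero_less_mult_iff mult_less_cancel_right)
        then show False by simp
      qed
    next
      fix \<gamma> assume "is_solution V \<gamma> \<and> \<gamma> 0 = p"
      then have eq: "\<gamma> = gsol c" using unique[OF cr] g0 by auto
      show "(0,0) \<in> inside (\<gamma> ` {0..2*pi})" unfolding eq by (rule inside_lemma[OF cr c0])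
    qed
  qed
  show ?thesis unfolding isochronous_center_def
    by (rule exI[of _ ?U], rule exI[of _ "2*pi"]) (use oU zU main in auto)
qed

lemma u0: "u 0 = 0" by (simp add: u_def G_def E_def w_def)

lemma u_sign: assumes "w x > 0" shows "sgn x * \<bar>u x\<bar> = u x"
proof (cases "x = 0")
  case True then show ?thesis by (simp add: u0)
next
  case False
  have pos: "(w x ^ m - 1) * (w x - 1) > 0"
  proof (cases "w x > 1")
    case True
    then have "w x ^ m > 1" using m1 by (simp add: one_less_power)
    then show ?thesis using True by simp
  next
    case False
    have "k * x \<noteq> 0" using \<open>x \<noteq> 0\<close> k0 by simp
    then have "w x < 1" using False unfolding w_def by linarith
    then have "w x ^ m < 1" using m1 assms by (simp add: power_less_one_iff)
    then show ?thesis using \<open>w x < 1\<close> by (simp add: mult_neg_neg)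
  qed
  have wm: "w x ^ m > 0" using assms by simp
  have "u x * x = (w x ^ m - 1) * (w x - 1) / (m * k^2 * w x ^ m)"
    using assms mpos k0 by (simp add: u_alt w_def field_simps power2_eq_square)
  also have "\<dots> > 0" using pos wm mpos k0 by (intro divide_pos_pos) auto
  finally have ux: "u x * x > 0" .
  then have "sgn x = sgn (u x)" by (auto simp: zero_less_mult_iff sgn_if)
  then show ?thesis by (simp add: sgn_mult_abs)
qed

theorem zu: "zero_urabe V"
proof -
  define p1 where "p1 = (\<lambda>x::real. - w x)"
  define q2 where "q2 = (\<lambda>x::real. - (real m * k))"
  define f where "f = (\<lambda>x. - (q2 x + deriv p1 x) / p1 x)"
  define g where "g = (\<lambda>x. - q2 x * (p0 x)^2 / p1 x + q1 x * p0 x - p1 x * q0 x)"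
  define F where "F = (\<lambda>x. oint 0 x f)"
  have dp1: "deriv p1 x = - k" for x
    unfolding p1_def w_def by (rule DERIV_imp_deriv) (auto intro!: derivative_eq_intros)
  have dp0': "deriv p0 x = dp0 x" for x by (rule DERIV_imp_deriv[OF dp0])
  define d where "d = 1 / \<bar>k\<bar>"
  have d: "d > 0" using k0 by (simp add: d_def)
  have wd: "w t > 0" if "\<bar>t\<bar> < d" for t
  proof -
    have "\<bar>k * t\<bar> < 1" using that k0 by (simp add: d_def abs_mult field_simps)
    then show ?thesis by (simp add: w_def)
  qed
  have seg: "w t > 0" if "\<bar>x\<bar> < d" "min 0 x \<le> t" "t \<le> max 0 x" for x t
    using that by (intro wd) auto
  have q00: "q0 0 = 0" using hf[of 0] mpos k0 by (simp add: p00)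
  have gG: "g x = G x" if "w x > 0" for x
  proof -
    have "w x * g x = w x * (q1 x * p0 x + w x * q0 x) - m*k*(p0 x)^2"
      using that by (simp add: g_def p1_def q2_def field_simps power2_eq_square)
    also have "\<dots> = w x * G x" by (simp add: wG)
    finally have "w x * g x = w x * G x" .
    then show ?thesis using that by simp
  qed
  have Fx: "F x = - (real (m+1) * ln (w x))" if x: "\<bar>x\<bar> < d" for x
  proof -
    have "oint 0 x f = - (real (m+1) * ln (w x)) - - (real (m+1) * ln (w 0))"
    proof (rule oint_ftc)
      fix t assume t: "min 0 x \<le> t" "t \<le> max 0 x"
      have wt: "w t > 0" by (rule seg[OF x t])
      have "((\<lambda>t. - (real (m+1) * ln (w t))) has_real_derivative - (real (m+1) * (k / w t))) (at t)"
        unfolding w_def using wt by (auto intro!: derivative_eq_intros simp: w_def)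
      moreover have "- (real (m+1) * (k / w t)) = f t"
        using wt by (simp add: f_def dp1 dp1[unfolded p1_def] p1_def q2_def field_simps)
      ultimately show "((\<lambda>t. - (real (m+1) * ln (w t))) has_real_derivative f t) (at t)" by simp
    qed
    then show ?thesis by (simp add: F_def w_def)
  qed
  have expF: "exp (- (real (m+1) * ln (w x))) = 1 / E x" if "w x > 0" for x
  proof -
    have "exp (real (m+1) * ln (w x)) = w x ^ (m+1)" by (subst exp_of_nat_mult) (simp add: that)
    then show ?thesis by (simp only: exp_minus E_def divide_inverse mult_1)
  qed
  have xi: "oint 0 x (\<lambda>s. g s * exp (2 * F s)) = (u x)^2 / 2" if x: "\<bar>x\<bar> < d" for x
  proof -
    have "oint 0 x (\<lambda>s. g s * exp (2 * F s)) = (u x)^2 / 2 - (u 0)^2 / 2"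
    proof (rule oint_ftc)
      fix t assume t: "min 0 x \<le> t" "t \<le> max 0 x"
      have wt: "w t > 0" by (rule seg[OF x t])
      have tt: "\<bar>t\<bar> < d" using x t by auto
      have "((\<lambda>t. (u t)^2 / 2) has_real_derivative (of_nat 2 * ((1 / E t) * u t ^ (2 - Suc 0))) / 2) (at t)"
        by (intro DERIV_cdivide DERIV_power u_deriv[OF wt])
      then have "((\<lambda>t. (u t)^2 / 2) has_real_derivative (2 * u t * (1 / E t)) / 2) (at t)"
        by simp
      moreover have "(2 * u t * (1 / E t)) / 2 = g t * exp (2 * F t)"
      proof -
        have "exp (2 * F t) = exp (F t) * exp (F t)" by (simp only: mult_2 exp_add)
        also have "\<dots> = (1 / E t)^2" using Fx[OF tt] expF[OF wt] by (simp only: power2_eq_square)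
        finally have "exp (2 * F t) = (1 / E t)^2" .
        then show ?thesis using gG[OF wt] by (simp add: u_def power2_eq_square)
      qed
      ultimately show "((\<lambda>t. (u t)^2 / 2) has_real_derivative g t * exp (2 * F t)) (at t)" by simp
    qed
    then show ?thesis by (simp add: u0)
  qed
  have main: "p0 0 = 0 \<and> q0 0 = 0 \<and> p1 0 \<noteq> 0 \<and>
         (\<exists>\<delta>>0. \<forall>x. \<bar>x\<bar> < \<delta> \<longrightarrow>
             - deriv p1 x * p0 x / p1 x + q1 x + deriv p0 x - 2 * q2 x * p0 x / p1 x = 0) \<and>
         (\<exists>\<delta>>0. \<forall>x. \<bar>x\<bar> < \<delta> \<longrightarrow> sgn x * sqrt (2 * oint 0 x (\<lambda>s. g s * exp (2 * F s))) = g x * exp (F x))"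
  proof (intro conjI exI[of _ d] allI impI)
    show "p0 0 = 0" by (rule p00)
    show "q0 0 = 0" by (rule q00)
    show "p1 0 \<noteq> 0" by (simp add: p1_def w_def)
    show "d > 0" "d > 0" by (rule d)+
  next
    fix x :: real assume x: "\<bar>x\<bar> < d"
    have wx: "w x > 0" by (rule wd[OF x])
    have "w x * (q1 x + dp0 x) = (2*m+1)*k*p0 x" using hd[of x] by (simp add: w_def)
    then show "- deriv p1 x * p0 x / p1 x + q1 x + deriv p0 x - 2 * q2 x * p0 x / p1 x = 0"
      using wx mpos by (simp add: dp1 dp1[unfolded p1_def] dp0' p1_def q2_def field_simps)
  next
    fix x :: real assume x: "\<bar>x\<bar> < d"
    have wx: "w x > 0" by (rule wd[OF x])
    have "sgn x * sqrt (2 * oint 0 x (\<lambda>s. g s * exp (2 * F s))) = sgn x * \<bar>u x\<bar>"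
      by (simp add: xi[OF x])
    also have "\<dots> = u x" by (rule u_sign[OF wx])
    also have "\<dots> = g x * exp (F x)" using gG[OF wx] Fx[OF x] expF[OF wx] by (simp add: u_def)
    finally show "sgn x * sqrt (2 * oint 0 x (\<lambda>s. g s * exp (2 * F s))) = g x * exp (F x)" .
  qed
  have "zero_urabe_coeffs p0 p1 q0 q1 q2"
    unfolding zero_urabe_coeffs_def Let_def using main unfolding f_def g_def F_def .
  moreover have "\<forall>x y. V (x, y) = (p0 x + p1 x * y, q0 x + q1 x * y + q2 x * y^2)"
    by (simp add: V_def p1_def q2_def)
  ultimately show ?thesis unfolding zero_urabe_def by blast
qed

end



lemma sys1:
  fixes a :: real
  shows "isochronous_center
        (\<lambda>(x, y). (- y + x * y - 3 * a / 4 * x^2 + a * x^3 - a / 4 * x^4,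
                    x + 3 * y^2 + 3 * a / 2 * x * y - x^2 + 9 * a / 4 * x^2 * y
                      + (1/3 + 9/8 * a^2) * x^3 - 3 * a / 4 * x^3 * y - 3 * a^2 / 8 * x^4)) \<and>
      zero_urabe
        (\<lambda>(x, y). (- y + x * y - 3 * a / 4 * x^2 + a * x^3 - a / 4 * x^4,
                    x + 3 * y^2 + 3 * a / 2 * x * y - x^2 + 9 * a / 4 * x^2 * y
                      + (1/3 + 9/8 * a^2) * x^3 - 3 * a / 4 * x^3 * y - 3 * a^2 / 8 * x^4))"
proof -
  have U: "usys (\<lambda>x. - 3 * a / 4 * x^2 + a * x^3 - a / 4 * x^4) (\<lambda>x. - 3 * a / 2 * x + 3 * a * x^2 - a * x^3)
    (\<lambda>x. x - x^2 + (1/3 + 9/8 * a^2) * x^3 - 3 * a^2 / 8 * x^4) (\<lambda>x. 3 * a / 2 * x + 9 * a / 4 * x^2 - 3 * a / 4 * x^3)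
    (-1) 3"
  proof (unfold_locales)
    fix x :: real
    show "((\<lambda>x. - 3 * a / 4 * x^2 + a * x^3 - a / 4 * x^4) has_real_derivative - 3 * a / 2 * x + 3 * a * x^2 - a * x^3) (at x)"
      by (auto intro!: derivative_eq_intros simp: algebra_simps power2_eq_square power3_eq_cube)
  next
    fix x :: real
    show "(1 + - 1 * x) * (3 * a / 2 * x + 9 * a / 4 * x^2 - 3 * a / 4 * x^3 + (- 3 * a / 2 * x + 3 * a * x^2 - a * x^3))
      = real (2 * 3 + 1) * - 1 * (- 3 * a / 4 * x^2 + a * x^3 - a / 4 * x^4)"
      by simp algebra
  next
    fix x :: real
    show "real 3 * - 1 * ((1 + - 1 * x) * ((3 * a / 2 * x + 9 * a / 4 * x^2 - 3 * a / 4 * x^3) * (- 3 * a / 4 * x^2 + a * x^3 - a / 4 * x^4)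
      + (1 + - 1 * x) * (x - x^2 + (1/3 + 9/8 * a^2) * x^3 - 3 * a^2 / 8 * x^4))
      - real 3 * - 1 * (- 3 * a / 4 * x^2 + a * x^3 - a / 4 * x^4)^2) = (1 + - 1 * x)^2 * ((1 + - 1 * x)^3 - 1)"
      by simp algebra
  qed simp_all
  have "(\<lambda>(x, y). (- y + x * y - 3 * a / 4 * x^2 + a * x^3 - a / 4 * x^4,
                    x + 3 * y^2 + 3 * a / 2 * x * y - x^2 + 9 * a / 4 * x^2 * y
                      + (1/3 + 9/8 * a^2) * x^3 - 3 * a / 4 * x^3 * y - 3 * a^2 / 8 * x^4)) = usys.V (\<lambda>x. - 3 * a / 4 * x^2 + a * x^3 - a / 4 * x^4)
    (\<lambda>x. x - x^2 + (1/3 + 9/8 * a^2) * x^3 - 3 * a^2 / 8 * x^4) (\<lambda>x. 3 * a / 2 * x + 9 * a / 4 * x^2 - 3 * a / 4 * x^3)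
    (-1) 3"
    unfolding usys.V_def[OF U] usys.w_def[OF U] by (auto simp: fun_eq_iff algebra_simps)
  then show ?thesis using usys.iso[OF U] usys.zu[OF U] by simp
qed


lemma hf2:
  fixes c x :: real assumes "c^2 = 2"
  shows "6 * (-1) * ((1 + (-1) * x) * ((- c*x - 9*c/2*x^2 + 3*c/2*x^3) * (c/2*x^2 - 2*c/3*x^3 + c/6*x^4) + (1 + (-1) * x) * (x - 5/2*x^2 + 13/3*x^3 - 4/3*x^4)) - 6 * (-1) * (c/2*x^2 - 2*c/3*x^3 + c/6*x^4)^2) = (1 + (-1) * x)^2 * ((1 + (-1) * x)^6 - 1)"
proof -
  have "6 * (-1) * ((1 + (-1) * x) * ((- c*x - 9*c/2*x^2 + 3*c/2*x^3) * (c/2*x^2 - 2*c/3*x^3 + c/6*x^4) + (1 + (-1) * x) * (x - 5/2*x^2 + 13/3*x^3 - 4/3*x^4)) - 6 * (-1) * (c/2*x^2 - 2*c/3*x^3 + c/6*x^4)^2) - (1 + (-1) * x)^2 * ((1 + (-1) * x)^6 - 1) = (c^2 - 2) * (3 * x^3 - 5/2 * x^4 - 7 * x^5 + 10 * x^6 - 4 * x^7 + 1/2 * x^8)" by (simp add: field_simps) algebra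
  then show ?thesis by (simp add: assms)
qed

lemma hf3:
  fixes c x :: real assumes "c^2 = 2"
  shows "3 * (2*c) * ((1 + (2*c) * x) * ((- 2*x + 8*c*x^2) * (x^2 + 2*c*x^3) + (1 + (2*c) * x) * (x + 2*c*x^2 + 14/3*x^3 - 2*c*x^4)) - 3 * (2*c) * (x^2 + 2*c*x^3)^2) = (1 + (2*c) * x)^2 * ((1 + (2*c) * x)^3 - 1)"
proof -
  have "3 * (2*c) * ((1 + (2*c) * x) * ((- 2*x + 8*c*x^2) * (x^2 + 2*c*x^3) + (1 + (2*c) * x) * (x + 2*c*x^2 + 14/3*x^3 - 2*c*x^4)) - 3 * (2*c) * (x^2 + 2*c*x^3)^2) - (1 + (2*c) * x)^2 * ((1 + (2*c) * x)^3 - 1) = (c^2 - 2) * (- 8 * c * x^3 - 32 * c^2 * x^4 - 32 * c^3 * x^5)" by algebra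
  then show ?thesis by (simp add: assms)
qed

lemma sys2:
  fixes s :: real
  assumes s: "s \<in> {1, -1}"
  shows "isochronous_center (\<lambda>(x, y). (- y + x * y + s * sqrt 2 / 2 * x^2 - s * 2 * sqrt 2 / 3 * x^3 + s * sqrt 2 / 6 * x^4,
                    x + 6 * y^2 - s * sqrt 2 * x * y - 5/2 * x^2 - s * 9 * sqrt 2 / 2 * x^2 * y
                      + 13/3 * x^3 + s * 3 * sqrt 2 / 2 * x^3 * y - 4/3 * x^4)) \<and> zero_urabe (\<lambda>(x, y). (- y + x * y + s * sqrt 2 / 2 * x^2 - s * 2 * sqrt 2 / 3 * x^3 + s * sqrt 2 / 6 * x^4,
                    x + 6 * y^2 - s * sqrt 2 * x * y - 5/2 * x^2 - s * 9 * sqrt 2 / 2 * x^2 * y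
                      + 13/3 * x^3 + s * 3 * sqrt 2 / 2 * x^3 * y - 4/3 * x^4))"
proof -
  define c where "c = s * sqrt 2"
  have c2: "c^2 = 2" using s by (auto simp: c_def power_mult_distrib)
  have cne: "c \<noteq> 0" using c2 by auto
  have U: "usys (\<lambda>x. (c/2*x^2 - 2*c/3*x^3 + c/6*x^4)) (\<lambda>x. (c*x - 2*c*x^2 + 2*c/3*x^3)) (\<lambda>x. (x - 5/2*x^2 + 13/3*x^3 - 4/3*x^4)) (\<lambda>x. (- c*x - 9*c/2*x^2 + 3*c/2*x^3)) (-1) 6"
  proof (unfold_locales)
    fix x :: real
    show "((\<lambda>x. (c/2*x^2 - 2*c/3*x^3 + c/6*x^4)) has_real_derivative (c*x - 2*c*x^2 + 2*c/3*x^3)) (at x)"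
      by (auto intro!: derivative_eq_intros simp: algebra_simps power2_eq_square power3_eq_cube)
  next
    fix x :: real
    show "(1 + -1 * x) * ((- c*x - 9*c/2*x^2 + 3*c/2*x^3) + (c*x - 2*c*x^2 + 2*c/3*x^3)) = real (2 * 6 + 1) * -1 * (c/2*x^2 - 2*c/3*x^3 + c/6*x^4)"
      by simp algebra
  next
    fix x :: real
    show "real 6 * -1 * ((1 + -1 * x) * ((- c*x - 9*c/2*x^2 + 3*c/2*x^3) * (c/2*x^2 - 2*c/3*x^3 + c/6*x^4) + (1 + -1 * x) * (x - 5/2*x^2 + 13/3*x^3 - 4/3*x^4)) - real 6 * -1 * (c/2*x^2 - 2*c/3*x^3 + c/6*x^4)^2) = (1 + -1 * x)^2 * ((1 + -1 * x)^6 - 1)"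
      using hf2[OF c2] by simp
  qed (simp_all add: cne)
  have "(\<lambda>(x, y). (- y + x * y + s * sqrt 2 / 2 * x^2 - s * 2 * sqrt 2 / 3 * x^3 + s * sqrt 2 / 6 * x^4,
                    x + 6 * y^2 - s * sqrt 2 * x * y - 5/2 * x^2 - s * 9 * sqrt 2 / 2 * x^2 * y
                      + 13/3 * x^3 + s * 3 * sqrt 2 / 2 * x^3 * y - 4/3 * x^4)) = usys.V (\<lambda>x. (c/2*x^2 - 2*c/3*x^3 + c/6*x^4)) (\<lambda>x. (x - 5/2*x^2 + 13/3*x^3 - 4/3*x^4)) (\<lambda>x. (- c*x - 9*c/2*x^2 + 3*c/2*x^3)) (-1) 6"
    unfolding usys.V_def[OF U] usys.w_def[OF U] unfolding c_def by (auto simp: fun_eq_iff algebra_simps)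
  then show ?thesis using usys.iso[OF U] usys.zu[OF U] by simp
qed

lemma sys3:
  fixes s :: real
  assumes s: "s \<in> {1, -1}"
  shows "isochronous_center (\<lambda>(x, y). (- y - s * 2 * sqrt 2 * x * y + x^2 + s * 2 * sqrt 2 * x^3,
                    x - s * 6 * sqrt 2 * y^2 - 2 * x * y + s * 2 * sqrt 2 * x^2
                      + s * 8 * sqrt 2 * x^2 * y + 14/3 * x^3 - s * 2 * sqrt 2 * x^4)) \<and> zero_urabe (\<lambda>(x, y). (- y - s * 2 * sqrt 2 * x * y + x^2 + s * 2 * sqrt 2 * x^3,
                    x - s * 6 * sqrt 2 * y^2 - 2 * x * y + s * 2 * sqrt 2 * x^2
                      + s * 8 * sqrt 2 * x^2 * y + 14/3 * x^3 - s * 2 * sqrt 2 * x^4))"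
proof -
  define c where "c = s * sqrt 2"
  have c2: "c^2 = 2" using s by (auto simp: c_def power_mult_distrib)
  have cne: "c \<noteq> 0" using c2 by auto
  have U: "usys (\<lambda>x. (x^2 + 2*c*x^3)) (\<lambda>x. (2*x + 6*c*x^2)) (\<lambda>x. (x + 2*c*x^2 + 14/3*x^3 - 2*c*x^4)) (\<lambda>x. (- 2*x + 8*c*x^2)) (2*c) 3"
  proof (unfold_locales)
    fix x :: real
    show "((\<lambda>x. (x^2 + 2*c*x^3)) has_real_derivative (2*x + 6*c*x^2)) (at x)"
      by (auto intro!: derivative_eq_intros simp: algebra_simps power2_eq_square power3_eq_cube)
  next
    fix x :: real
    show "(1 + (2*c) * x) * ((- 2*x + 8*c*x^2) + (2*x + 6*c*x^2)) = real (2 * 3 + 1) * (2*c) * (x^2 + 2*c*x^3)"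
      by simp algebra
  next
    fix x :: real
    show "real 3 * (2*c) * ((1 + (2*c) * x) * ((- 2*x + 8*c*x^2) * (x^2 + 2*c*x^3) + (1 + (2*c) * x) * (x + 2*c*x^2 + 14/3*x^3 - 2*c*x^4)) - real 3 * (2*c) * (x^2 + 2*c*x^3)^2) = (1 + (2*c) * x)^2 * ((1 + (2*c) * x)^3 - 1)"
      using hf3[OF c2] by simp
  qed (simp_all add: cne)
  have "(\<lambda>(x, y). (- y - s * 2 * sqrt 2 * x * y + x^2 + s * 2 * sqrt 2 * x^3,
                    x - s * 6 * sqrt 2 * y^2 - 2 * x * y + s * 2 * sqrt 2 * x^2
                      + s * 8 * sqrt 2 * x^2 * y + 14/3 * x^3 - s * 2 * sqrt 2 * x^4)) = usys.V (\<lambda>x. (x^2 + 2*c*x^3)) (\<lambda>x. (x + 2*c*x^2 + 14/3*x^3 - 2*c*x^4)) (\<lambda>x. (- 2*x + 8*c*x^2)) (2*c) 3"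
    unfolding usys.V_def[OF U] usys.w_def[OF U] unfolding c_def by (auto simp: fun_eq_iff algebra_simps)
  then show ?thesis using usys.iso[OF U] usys.zu[OF U] by simp
qed


theorem theorem4p2:
  shows
   "(\<forall>a::real.
      isochronous_center
        (\<lambda>(x, y). (- y + x * y - 3 * a / 4 * x^2 + a * x^3 - a / 4 * x^4,
                    x + 3 * y^2 + 3 * a / 2 * x * y - x^2 + 9 * a / 4 * x^2 * y
                      + (1/3 + 9/8 * a^2) * x^3 - 3 * a / 4 * x^3 * y - 3 * a^2 / 8 * x^4)) \<and>
      zero_urabe
        (\<lambda>(x, y). (- y + x * y - 3 * a / 4 * x^2 + a * x^3 - a / 4 * x^4,
                    x + 3 * y^2 + 3 * a / 2 * x * y - x^2 + 9 * a / 4 * x^2 * y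
                      + (1/3 + 9/8 * a^2) * x^3 - 3 * a / 4 * x^3 * y - 3 * a^2 / 8 * x^4)))
    \<and> (\<forall>s::real. s \<in> {1, -1} \<longrightarrow>
      isochronous_center
        (\<lambda>(x, y). (- y + x * y + s * sqrt 2 / 2 * x^2 - s * 2 * sqrt 2 / 3 * x^3 + s * sqrt 2 / 6 * x^4,
                    x + 6 * y^2 - s * sqrt 2 * x * y - 5/2 * x^2 - s * 9 * sqrt 2 / 2 * x^2 * y
                      + 13/3 * x^3 + s * 3 * sqrt 2 / 2 * x^3 * y - 4/3 * x^4)) \<and>
      zero_urabe
        (\<lambda>(x, y). (- y + x * y + s * sqrt 2 / 2 * x^2 - s * 2 * sqrt 2 / 3 * x^3 + s * sqrt 2 / 6 * x^4,
                    x + 6 * y^2 - s * sqrt 2 * x * y - 5/2 * x^2 - s * 9 * sqrt 2 / 2 * x^2 * y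
                      + 13/3 * x^3 + s * 3 * sqrt 2 / 2 * x^3 * y - 4/3 * x^4)))
    \<and> (\<forall>s::real. s \<in> {1, -1} \<longrightarrow>
      isochronous_center
        (\<lambda>(x, y). (- y - s * 2 * sqrt 2 * x * y + x^2 + s * 2 * sqrt 2 * x^3,
                    x - s * 6 * sqrt 2 * y^2 - 2 * x * y + s * 2 * sqrt 2 * x^2
                      + s * 8 * sqrt 2 * x^2 * y + 14/3 * x^3 - s * 2 * sqrt 2 * x^4)) \<and>
      zero_urabe
        (\<lambda>(x, y). (- y - s * 2 * sqrt 2 * x * y + x^2 + s * 2 * sqrt 2 * x^3,
                    x - s * 6 * sqrt 2 * y^2 - 2 * x * y + s * 2 * sqrt 2 * x^2
                      + s * 8 * sqrt 2 * x^2 * y + 14/3 * x^3 - s * 2 * sqrt 2 * x^4)))"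
    using sys1 sys2 sys3 by blast

end
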